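(* Let $K>1$ and let $r>0$ satisfy $r=\dfrac{I_1(2Kr)}{I_0(2Kr)}$. Then $$r<\sqrt[4]{1-\frac{1}{K}}.$$
   Context: $I_\nu$ denotes the modified Bessel function of the first kind of order $\nu$. The equation $r=I_1(2Kr)/I_0(2Kr)$ is the self-consistency equation for the asymptotic order parameter $r$ of the stochastic Kuramoto model with coupling $K$. *)

theory Defs
  imports "HOL-Analysis.Analysis"
begin

definition besselI :: "nat \<Rightarrow> real \<Rightarrow> real" where
  "besselI n x = (\<Sum>k. (x / 2) ^ (2 * k + n) / (fact k * fact (k + n)))"

end

theory Submission
  imports Defs
begin


lemma choose_real: "i \<le> n \<Longrightarrow> real (n choose i) = fact n / (fact i * fact (n - i))"
proof -
  assume h: "i \<le> n"
  have "fact i * fact (n - i) * real (n choose i) = (fact n :: real)"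
    using binomial_fact_lemma[OF h] by (metis of_nat_fact of_nat_mult)
  then show ?thesis by (simp add: field_simps)
qed

lemma alg: "A > 0 \<Longrightarrow> B > 0 \<Longrightarrow> C > 0 \<Longrightarrow> D > 0 \<Longrightarrow> E > 0 \<Longrightarrow>
  (A/(B*C))*(D/(C*E))/(A*D) = 1/(B*E*C^2)" for A B C D E :: real
  by (simp add: field_simps power2_eq_square)

definition cc :: "nat \<Rightarrow> real" where "cc n = real ((2*n) choose n) / (fact n)^2"

lemma L0: "(\<Sum>i\<le>n. 1 / (fact i * fact (n - i))^2) = cc n"
proof -
  have "(\<Sum>i\<le>n. 1 / (fact i * fact (n - i) :: real)^2) = (\<Sum>i\<le>n. real (n choose i)^2 / (fact n)^2)"
    by (rule sum.cong) (auto simp: choose_real power_divide)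
  also have "\<dots> = real (\<Sum>i\<le>n. (n choose i)^2) / (fact n)^2"
    by (simp add: sum_divide_distrib)
  also have "\<dots> = cc n" by (simp add: choose_square_sum cc_def)
  finally show ?thesis .
qed



lemma choose_a: "i \<le> n \<Longrightarrow> real ((n+1) choose (n - i)) = fact (n+1) / (fact (n-i) * fact (i+1))"
proof -
  assume i: "i \<le> n"
  have "n + 1 - (n - i) = i + 1" using i by simp
  then show ?thesis using choose_real[of "n-i" "n+1"] i by simp
qed

lemma choose_b: "real ((2*n+1) choose n) = (2*real n+1) * fact (2*n) / (fact n * ((real n+1) * fact n))"
proof -
  have h: "2*n+1-n = Suc n" by simp
  have f: "(fact (Suc (2*n))::real) = of_nat (Suc (2*n)) * fact (2*n)" by (rule fact_Suc)
  have "(fact (2*n+1)::real) = (2*real n+1) * fact (2*n)" using f by (simp del: fact_Suc)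
  moreover have "(fact (Suc n)::real) = (real n+1) * fact n" by (simp only: fact_Suc) simp
  ultimately show ?thesis using choose_real[of n "2*n+1"] unfolding h by (simp add: ac_simps)
qed

lemma choose_c: "real ((2*n) choose n) = fact (2*n) / (fact n * fact n)"
proof -
  have h: "2*n-n = n" by simp
  show ?thesis using choose_real[of n "2*n"] unfolding h by simp
qed

lemma alg2: "F > 0 \<Longrightarrow> m \<ge> 0 \<Longrightarrow> ((2*m+1)*G/(F*((m+1)*F)))/(F*((m+1)*F)) = (G/(F*F)/F^2)*(2*m+1)/(m+1)^2"
  for F G m :: real by (simp add: field_simps power2_eq_square)

lemma L1: "(\<Sum>i\<le>n. 1 / (fact i * fact (i+1) * (fact (n - i))^2)) = cc n * (2*n+1) / (n+1)^2"
proof -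
  have "(\<Sum>i\<le>n. 1 / (fact i * fact (i+1) * (fact (n - i))^2 :: real)) = (\<Sum>i\<le>n. real (n choose i) * real ((n+1) choose (n - i)) / (fact n * fact (n+1)))"
  proof (rule sum.cong)
    fix i assume "i \<in> {..n}"
    then have i: "i \<le> n" by simp
    show "1 / (fact i * fact (i+1) * (fact (n - i))^2 :: real) = real (n choose i) * real ((n+1) choose (n - i)) / (fact n * fact (n+1))"
      unfolding choose_a[OF i] choose_real[OF i] using alg[of "fact n" "fact i" "fact (n-i)" "fact (n+1)" "fact (i+1)"]
      by (simp only: fact_gt_zero mult_ac times_divide_eq_left times_divide_eq_right simp_thms)
  qed simp
  also have "\<dots> = real (\<Sum>i\<le>n. (n choose i) * ((n+1) choose (n - i))) / (fact n * fact (n+1))"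
    by (simp add: sum_divide_distrib)
  also have "\<dots> = real ((2*n+1) choose n) / (fact n * fact (n+1))"
    using vandermonde[of n "n+1" n] by (simp add: mult_2)
  also have "\<dots> = cc n * (2*n+1) / (n+1)^2"
  proof -
    have e3: "(fact (n+1) :: real) = (real n+1) * fact n" by (simp only: Suc_eq_plus1[symmetric] fact_Suc) simp
    show ?thesis unfolding cc_def choose_b choose_c e3
      using alg2[of "fact n" "real n" "fact (2*n)"] by (simp add: ac_simps)
  qed
  finally show ?thesis .
qed

lemma choose_d: "i \<le> n \<Longrightarrow> real ((n+2) choose (n + 1 - i)) = fact (n+2) / (fact (n-i+1) * fact (i+1))"
proof -
  assume i: "i \<le> n"
  have "n + 2 - (n + 1 - i) = i + 1" "n + 1 - i = n - i + 1" using i by simp_all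
  then show ?thesis using choose_real[of "n+1-i" "n+2"] i by simp
qed

lemma alg3: "A > 0 \<Longrightarrow> B > 0 \<Longrightarrow> C > 0 \<Longrightarrow> D > 0 \<Longrightarrow> E > 0 \<Longrightarrow> G > 0 \<Longrightarrow>
  (A/(B*C))*(D/(G*E))/(A*D) = 1/(B*E*C*G)" for A B C D E G :: real
  by (simp add: field_simps)

lemma L2: "(\<Sum>i\<le>n. 1 / (fact i * fact (i+1) * fact (n - i) * fact (n - i + 1))) = cc (n+1) * (n+1) / (n+2)"
proof -
  have "(\<Sum>i\<le>n. 1 / (fact i * fact (i+1) * fact (n - i) * fact (n - i + 1) :: real)) = (\<Sum>i\<le>n. real (n choose i) * real ((n+2) choose (n + 1 - i)) / (fact n * fact (n+2)))"
  proof (rule sum.cong)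
    fix i assume "i \<in> {..n}"
    then have i: "i \<le> n" by simp
    show "1 / (fact i * fact (i+1) * fact (n - i) * fact (n - i + 1) :: real) = real (n choose i) * real ((n+2) choose (n + 1 - i)) / (fact n * fact (n+2))"
      unfolding choose_d[OF i] choose_real[OF i] using alg3[of "fact n" "fact i" "fact (n-i)" "fact (n+2)" "fact (i+1)" "fact (n-i+1)"]
      by (simp only: fact_gt_zero mult_ac times_divide_eq_left times_divide_eq_right simp_thms)
  qed simp
  also have "\<dots> = real (\<Sum>i\<le>n. (n choose i) * ((n+2) choose (n + 1 - i))) / (fact n * fact (n+2))"
    by (simp add: sum_divide_distrib)
  also have "(\<Sum>i\<le>n. (n choose i) * ((n+2) choose (n + 1 - i))) = (\<Sum>i\<le>Suc n. (n choose i) * ((n+2) choose (n + 1 - i)))"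
    by (simp add: sum.atMost_Suc)
  also have "\<dots> = (2*n+2) choose (n+1)"
    using vandermonde[of n "n+2" "n+1"] by (simp add: mult_2)
  also have "real ((2*n+2) choose (n+1)) / (fact n * fact (n+2)) = cc (n+1) * (n+1) / (n+2)"
  proof -
    have e3: "(fact (n+1) :: real) = (real n+1) * fact n" by (simp only: Suc_eq_plus1[symmetric] fact_Suc) simp
    have e4: "(fact (n+2) :: real) = (real n+2) * ((real n+1) * fact n)"
      by (simp only: numeral_2_eq_2 add_Suc_right fact_Suc) (simp add: ac_simps)
    have e5: "2*(n+1) = 2*n+2" by simp
    have alg4: "X/(F*((m+2)*((m+1)*F))) = X/((m+1)*F)^2*(m+1)/(m+2)" if "F>0" "m \<ge> 0" for X F m :: real
    proof -
      have "X/((m+1)*F)^2*(m+1)/(m+2) = ((m+1) * X) / ((m+1) * ((m+1)*F*F*(m+2)))"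
        by (simp add: power2_eq_square mult_ac)
      also have "\<dots> = X/((m+1)*F*F*(m+2))" using that by (simp only: mult_divide_mult_cancel_left_if) simp
      finally show ?thesis by (simp add: mult_ac)
    qed
    show ?thesis unfolding cc_def e3 e4 e5 using alg4[of "fact n" "real n"] by (simp add: ac_simps)
  qed
  finally show ?thesis .
qed



lemma pow_split: "i \<le> k \<Longrightarrow> (t::real)^(2*i) * t^(2*(k-i)) = t^(2*k)"
proof -
  assume "i \<le> k" then have "2*i + 2*(k-i) = 2*k" by simp
  then show ?thesis by (simp add: power_add[symmetric])
qed

lemma series_key:
  fixes t :: real
  assumes t: "t > 0"
  obtains W M1 M2 where "besselI 0 (2*t)^2 = W" "besselI 1 (2*t)^2 = W - M1"
    "besselI 0 (2*t) * besselI 1 (2*t) = t*(2*M1 - M2)" "M1^2 < W*M2" "W > 0"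
proof -
  define s0 where "s0 k = t^(2*k)/(fact k * fact k)" for k
  define s1 where "s1 k = t^(2*k+1)/(fact k * fact (k+1))" for k
  have B0: "besselI 0 (2*t) = suminf s0" unfolding besselI_def s0_def by simp
  have B1: "besselI 1 (2*t) = suminf s1" unfolding besselI_def s1_def by simp
  have e: "summable (\<lambda>k. inverse (fact k) * (t^2)^k)" by (rule summable_exp)
  have s0le: "norm (norm (s0 k)) \<le> inverse (fact k) * (t^2)^k" for k
  proof -
    have "norm (norm (s0 k)) = (t^2)^k / (fact k * fact k)" unfolding s0_def
      using t by (simp add: power_mult)
    also have "\<dots> \<le> (t^2)^k / fact k"
      by (rule divide_left_mono) (auto simp: t)
    finally show ?thesis by (simp add: field_simps)
  qed
  have ns0: "summable (\<lambda>k. norm (s0 k))" by (rule summable_comparison_test'[OF e s0le])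
  have e1: "summable (\<lambda>k. t * (inverse (fact k) * (t^2)^k))" by (rule summable_mult[OF e])
  have s1le: "norm (norm (s1 k)) \<le> t * (inverse (fact k) * (t^2)^k)" for k
  proof -
    have aux: "(fact k::real) \<le> fact k * fact (k+1)"
      using fact_ge_1[of "k+1", where 'a=real] by (simp add: mult_le_cancel_left1 del: fact_Suc)
    have "norm (norm (s1 k)) = t * ((t^2)^k / (fact k * fact (k+1)))" unfolding s1_def
      using t by (simp add: power_mult)
    also have "\<dots> \<le> t * ((t^2)^k / fact k)"
      by (rule mult_left_mono, rule divide_left_mono[OF aux]) (auto simp: t less_imp_le)
    finally show ?thesis by (simp add: field_simps)
  qed
  have ns1: "summable (\<lambda>k. norm (s1 k))" by (rule summable_comparison_test'[OF e1 s1le])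
  define w where "w k = cc k * t^(2*k)" for k
  define a where "a k = 1 / (real k + 1)" for k
  have c00: "(\<Sum>i\<le>k. s0 i * s0 (k-i)) = w k" for k
  proof -
    have "(\<Sum>i\<le>k. s0 i * s0 (k-i)) = (\<Sum>i\<le>k. t^(2*k) * (1 / (fact i * fact (k - i))^2))"
    proof (rule sum.cong)
      fix i assume "i \<in> {..k}" then have i: "i \<le> k" by simp
      show "s0 i * s0 (k-i) = t^(2*k) * (1 / (fact i * fact (k - i))^2)"
        unfolding s0_def pow_split[OF i, symmetric] by (simp add: power2_eq_square)
    qed simp
    also have "\<dots> = w k" unfolding sum_distrib_left[symmetric] L0 w_def by simp
    finally show ?thesis .
  qed
  have c10: "(\<Sum>i\<le>k. s1 i * s0 (k-i)) = t * (w k * (2 * a k - (a k)^2))" for k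
  proof -
    have "(\<Sum>i\<le>k. s1 i * s0 (k-i)) = (\<Sum>i\<le>k. (t * t^(2*k)) * (1 / (fact i * fact (i+1) * (fact (k - i))^2)))"
    proof (rule sum.cong)
      fix i assume "i \<in> {..k}" then have i: "i \<le> k" by simp
      have "t^(2*i+1) = t * t^(2*i)" by simp
      then show "s1 i * s0 (k-i) = (t * t^(2*k)) * (1 / (fact i * fact (i+1) * (fact (k - i))^2))"
        unfolding s0_def s1_def pow_split[OF i, symmetric] by (simp add: power2_eq_square)
    qed simp
    also have "\<dots> = t * t^(2*k) * (cc k * (2*k+1) / (k+1)^2)" unfolding sum_distrib_left[symmetric] L1 by simp
    also have "\<dots> = t * (w k * (2 * a k - (a k)^2))"
    proof -
      have q: "(2*m+1)/(m+1)^2 = 2*(1/(m+1)) - (1/(m+1))^2" if "m \<ge> 0" for m :: real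
      proof -
        have "m + 1 > 0" using that by simp
        then show ?thesis by (simp add: divide_simps power2_eq_square)
      qed
      have "t * t^(2*k) * (cc k * (2*k+1) / (k+1)^2) = t * (w k * ((2*real k+1)/(real k+1)^2))"
        unfolding w_def by (simp add: ac_simps)
      also have "\<dots> = t * (w k * (2 * a k - (a k)^2))" unfolding a_def using q[of "real k"] by simp
      finally show ?thesis .
    qed
    finally show ?thesis .
  qed
  define f where "f k = w k * (1 - a k)" for k
  have c11: "(\<Sum>i\<le>k. s1 i * s1 (k-i)) = f (Suc k)" for k
  proof -
    have "(\<Sum>i\<le>k. s1 i * s1 (k-i)) = (\<Sum>i\<le>k. (t * t * t^(2*k)) * (1 / (fact i * fact (i+1) * fact (k - i) * fact (k - i + 1))))"
    proof (rule sum.cong)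
      fix i assume "i \<in> {..k}" then have i: "i \<le> k" by simp
      have "t^(2*i+1) = t * t^(2*i)" "t^(2*(k-i)+1) = t * t^(2*(k-i))" by simp_all
      then show "s1 i * s1 (k-i) = (t * t * t^(2*k)) * (1 / (fact i * fact (i+1) * fact (k - i) * fact (k - i + 1)))"
        unfolding s1_def pow_split[OF i, symmetric] by (simp add: ac_simps)
    qed simp
    also have "\<dots> = t * t * t^(2*k) * (cc (k+1) * (k+1) / (k+2))" unfolding sum_distrib_left[symmetric] L2 by simp
    also have "\<dots> = f (Suc k)"
    proof -
      have q: "(m+1)/(m+2) = 1 - 1/(m+2)" if "m \<ge> 0" for m :: real
      proof -
        have "m + 2 > 0" using that by simp
        then show ?thesis by (simp add: divide_simps)
      qed
      have "t * t * t^(2*k) = t^(2*(Suc k))" by (simp add: power2_eq_square)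
      then have "t * t * t^(2*k) * (cc (k+1) * (k+1) / (k+2)) = w (Suc k) * ((real k+1)/(real k+2))"
        unfolding w_def by (simp add: ac_simps)
      also have "\<dots> = f (Suc k)" unfolding f_def a_def using q[of "real k"] by (simp add: add_ac)
      finally show ?thesis .
    qed
    finally show ?thesis .
  qed
  have S0: "w sums (besselI 0 (2*t))^2"
    using Cauchy_product_sums[OF ns0 ns0] unfolding c00 B0 power2_eq_square .
  have S01: "(\<lambda>k. t * (w k * (2 * a k - (a k)^2))) sums (besselI 0 (2*t) * besselI 1 (2*t))"
    using Cauchy_product_sums[OF ns1 ns0] unfolding c10 B0 B1 by (simp add: mult.commute)
  have S11': "(\<lambda>k. f (Suc k)) sums (besselI 1 (2*t))^2"
    using Cauchy_product_sums[OF ns1 ns1] unfolding c11 B1 power2_eq_square .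
  have f0: "f 0 = 0" unfolding f_def a_def by simp
  have S11: "f sums (besselI 1 (2*t))^2" using S11' unfolding sums_Suc_iff f0 by simp
  have wpos: "w k \<ge> 0" for k unfolding w_def cc_def using t by simp
  have apos: "0 \<le> a k" "a k \<le> 1" for k unfolding a_def by simp_all
  have sw: "summable w" using S0 by (rule sums_summable)
  have swa: "summable (\<lambda>k. w k * a k)"
    by (rule summable_comparison_test'[OF sw]) (use wpos apos in \<open>auto intro: mult_left_le\<close>)
  have swa2: "summable (\<lambda>k. w k * (a k)^2)"
  proof (rule summable_comparison_test'[OF sw])
    fix n
    have "(a n)^2 \<le> 1" using apos[of n] by (simp add: power_le_one)
    then show "norm (w n * (a n)^2) \<le> w n" using wpos[of n] by (auto intro: mult_left_le)
  qed
  define W where "W = suminf w"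
  define M1 where "M1 = suminf (\<lambda>k. w k * a k)"
  define M2 where "M2 = suminf (\<lambda>k. w k * (a k)^2)"
  have sW: "w sums W" using sw W_def by (simp add: summable_sums)
  have sM1: "(\<lambda>k. w k * a k) sums M1" using swa M1_def by (simp add: summable_sums)
  have sM2: "(\<lambda>k. w k * (a k)^2) sums M2" using swa2 M2_def by (simp add: summable_sums)
  have E0: "besselI 0 (2*t)^2 = W" using sums_unique2[OF S0 sW] .
  have "f sums (W - M1)" using sums_diff[OF sW sM1] unfolding f_def by (simp add: algebra_simps)
  then have E1: "besselI 1 (2*t)^2 = W - M1" using sums_unique2[OF S11] by blast
  have "(\<lambda>k. t * (w k * (2 * a k - (a k)^2))) sums (t * (2*M1 - M2))"
    using sums_mult[OF sums_diff[OF sums_mult[OF sM1, of 2] sM2], of t] by (simp add: algebra_simps)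
  then have E01: "besselI 0 (2*t) * besselI 1 (2*t) = t*(2*M1 - M2)" using sums_unique2[OF S01] by blast
  have w0: "w 0 = 1" unfolding w_def cc_def by simp
  have Wpos: "W > 0" unfolding W_def by (rule suminf_pos2[OF sw wpos, of 0]) (simp add: w0)
  define \<mu> where "\<mu> = M1 / W"
  define g where "g k = w k * (a k - \<mu>)^2" for k
  have "g sums (M2 - 2*\<mu>*M1 + \<mu>^2 * W)"
  proof -
    have "(\<lambda>k. w k * (a k)^2 - 2*\<mu>*(w k * a k) + \<mu>^2 * w k) sums (M2 - 2*\<mu>*M1 + \<mu>^2 * W)"
      by (intro sums_add sums_diff sums_mult sM1 sM2 sW)
    then show ?thesis unfolding g_def by (simp add: algebra_simps power2_eq_square)
  qed
  moreover have "0 < suminf g"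
  proof -
    have sg: "summable g" using calculation by (rule sums_summable)
    have gnn: "0 \<le> g k" for k unfolding g_def using wpos by simp
    have w1: "w 1 > 0" unfolding w_def cc_def using t by simp
    show ?thesis
    proof (cases "\<mu> = 1")
      case True
      have "g 1 > 0" unfolding g_def a_def True using w1 by simp
      then show ?thesis by (rule suminf_pos2[OF sg gnn])
    next
      case False
      have "g 0 > 0" unfolding g_def a_def using False w0 by simp
      then show ?thesis by (rule suminf_pos2[OF sg gnn])
    qed
  qed
  ultimately have pos: "0 < M2 - 2*\<mu>*M1 + \<mu>^2 * W" using sums_unique by metis
  have "M2 - 2*\<mu>*M1 + \<mu>^2 * W = (W*M2 - M1^2) / W"
    unfolding \<mu>_def using Wpos by (simp add: field_simps power2_eq_square)
  with pos Wpos have "M1^2 < W*M2" by (simp add: divide_pos_pos zero_less_divide_iff)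
  then show ?thesis using that E0 E1 E01 Wpos by blast
qed



theorem mainTheorem1:
  fixes K r :: real
  assumes "K > 1" and "r > 0"
    and "r = besselI 1 (2 * K * r) / besselI 0 (2 * K * r)"
  shows "r < root 4 (1 - 1 / K)"
proof -
  define t where "t = K * r"
  have t: "t > 0" unfolding t_def using assms by simp
  have x: "2 * K * r = 2 * t" unfolding t_def by simp
  obtain W M1 M2 where E0: "besselI 0 (2*t)^2 = W" and E1: "besselI 1 (2*t)^2 = W - M1"
    and E01: "besselI 0 (2*t) * besselI 1 (2*t) = t*(2*M1 - M2)" and ineq: "M1^2 < W*M2" and Wpos: "W > 0"
    using series_key[OF t] by blast
  define I0 where "I0 = besselI 0 (2*t)"
  define I1 where "I1 = besselI 1 (2*t)"
  have r: "r = I1 / I0" using assms(3) unfolding x I0_def I1_def .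
  have I0nz: "I0 \<noteq> 0" using E0 Wpos unfolding I0_def by auto
  have r2: "r^2 = (W - M1) / W" using E0 E1 unfolding r I0_def I1_def by (simp add: power_divide)
  have r4: "r^4 = ((W - M1) / W)^2" using r2 by (metis power_mult numeral_times_numeral semiring_norm(85) num_double)
  have iK: "1 / K = (2*M1 - M2) / W"
  proof -
    have "1 / K = r / t" unfolding t_def using assms by simp
    also have "\<dots> = (I0 * I1) / (I0^2 * t)" unfolding r using I0nz by (simp add: power2_eq_square)
    also have "\<dots> = (2*M1 - M2) / W" using E0 E01 t unfolding I0_def I1_def by simp
    finally show ?thesis .
  qed
  have "r^4 < 1 - 1/K"
  proof -
    have "((W - M1) / W)^2 = (W - M1)^2 / W^2" by (simp add: power_divide)
    also have "\<dots> < (W^2 - (2*M1 - M2)*W) / W^2"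
      using ineq Wpos by (intro divide_strict_right_mono) (simp_all add: power2_eq_square algebra_simps)
    also have "\<dots> = 1 - (2*M1 - M2) / W" using Wpos by (simp add: field_simps power2_eq_square)
    finally show ?thesis unfolding r4 iK .
  qed
  then have "root 4 (r^4) < root 4 (1 - 1/K)" by (intro real_root_less_mono) simp_all
  then show ?thesis using assms(2) by (simp add: real_root_power_cancel)
qed


end
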